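(* If an affine bijection $\sigma:\mathcal{G}_N\to\mathcal{G}_N$ satisfies $\sigma(A_0)=A_0$ and $\sigma(A_\mu)=A_\mu$ for all $\mu=1,\ldots,N$, then $\sigma$ is the identity.
   Context: $\mathcal{G}_N$ is the set of real symmetric positive semi-definite $N\times N$ matrices with unit diagonal. $A_0$ is the all-ones $N\times N$ matrix, and for $\mu=1,\ldots,N$, $A_\mu=\mathbf{s}\mathbf{s}^\top$ where $\mathbf{s}\in\{\pm1\}^N$ has $s_\mu=-1$ and all other entries $+1$. *)

theory Defs
  imports "HOL-Analysis.Analysis"
begin

text \<open>Real N x N matrices are modelled as real^'n^'n, with N = CARD('n) and the
index set {1..N} identified with the finite type 'n.\<close>

definition psd :: "real^'n^'n \<Rightarrow> bool" where
  "psd M \<longleftrightarrow> (\<forall>x :: real^'n. 0 \<le> x \<bullet> (M *v x))"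

definition elliptope :: "(real^'n^'n) set" where
  "elliptope = {M. transpose M = M \<and> psd M \<and> (\<forall>i. M $ i $ i = 1)}"

definition A0 :: "real^'n^'n" where
  "A0 = (\<chi> i j. 1)"

definition sgnvec :: "'n \<Rightarrow> real^'n" where
  "sgnvec mu = (\<chi> k. if k = mu then -1 else 1)"

definition Amu :: "'n \<Rightarrow> real^'n^'n" where
  "Amu mu = (\<chi> i j. sgnvec mu $ i * sgnvec mu $ j)"

definition affine_on :: "('a::real_vector) set \<Rightarrow> ('a \<Rightarrow> 'b::real_vector) \<Rightarrow> bool" where
  "affine_on S f \<longleftrightarrow> (\<forall>x\<in>S. \<forall>y\<in>S. \<forall>u::real. 0 \<le> u \<and> u \<le> 1 \<longrightarrow>
      f (u *\<^sub>R x + (1 - u) *\<^sub>R y) = u *\<^sub>R f x + (1 - u) *\<^sub>R f y)"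

end

theory Submission
  imports Defs
begin

lemma sym_entry: "transpose M = M \<Longrightarrow> M $ i $ j = M $ j $ i"
  by (metis transpose_def vec_lambda_beta)

lemma mvscale: "((c::real) *\<^sub>R (M::real^'n^'m)) *v x = c *\<^sub>R (M *v x)"
  by (simp add: vec_eq_iff matrix_vector_mult_def sum_distrib_left mult.assoc)

lemma ax_quad: "axis i (1::real) \<bullet> (M *v axis j 1) = M $ i $ j"
  by (simp add: matrix_vector_mult_basis inner_axis' column_def)

lemma Q3:
  fixes M :: "real^'n^'n"
  shows "(x1 *\<^sub>R axis i 1 + x2 *\<^sub>R axis j 1 + x3 *\<^sub>R axis k 1) \<bullet> (M *v (x1 *\<^sub>R axis i 1 + x2 *\<^sub>R axis j 1 + x3 *\<^sub>R axis k 1)) = x1*x1*M$i$i + x1*x2*M$i$j + x1*x3*M$i$k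
     + x2*x1*M$j$i + x2*x2*M$j$j + x2*x3*M$j$k + x3*x1*M$k$i + x3*x2*M$k$j + x3*x3*M$k$k"
  by (simp add: matrix_vector_right_distrib matrix_vector_mult_scaleR inner_add_left inner_add_right ax_quad algebra_simps)

lemma ell_entry:
  assumes "X \<in> elliptope"
  shows "\<bar>X $ i $ j\<bar> \<le> 1"
proof (cases "i = j")
  case True then show ?thesis using assms by (simp add: elliptope_def)
next
  case False
  have s: "X$j$i = X$i$j" using assms by (simp add: elliptope_def sym_entry)
  have d: "X$i$i = 1" "X$j$j = 1" using assms by (auto simp: elliptope_def)
  have p: "psd X" using assms by (simp add: elliptope_def)
  have "0 \<le> (1 *\<^sub>R axis i 1 + 1 *\<^sub>R axis j 1 + 0 *\<^sub>R axis j 1) \<bullet> (X *v (1 *\<^sub>R axis i 1 + 1 *\<^sub>R axis j 1 + 0 *\<^sub>R axis j (1::real)))"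
    using p psd_def by blast
  hence a: "0 \<le> 2 + 2 * X$i$j" unfolding Q3 using s d by simp
  have "0 \<le> (1 *\<^sub>R axis i 1 + (-1) *\<^sub>R axis j 1 + 0 *\<^sub>R axis j 1) \<bullet> (X *v (1 *\<^sub>R axis i 1 + (-1) *\<^sub>R axis j 1 + 0 *\<^sub>R axis j (1::real)))"
    using p psd_def by blast
  hence b: "0 \<le> 2 - 2 * X$i$j" unfolding Q3 using s d by simp
  show ?thesis using a b by linarith
qed

definition outer :: "real^'n \<Rightarrow> real^'n \<Rightarrow> real^'n^'n" where
  "outer u w = (\<chi> i j. u$i * w$j)"

lemma outer_quad: "v \<bullet> (outer u w *v v) = (u \<bullet> v) * (w \<bullet> v)"
proof -
  have "outer u w *v v = (w \<bullet> v) *\<^sub>R u"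
    by (simp add: vec_eq_iff outer_def matrix_vector_mult_def inner_vec_def sum_distrib_left mult.commute mult.left_commute)
  then show ?thesis by (simp add: inner_commute)
qed

definition Phi :: "'n \<Rightarrow> 'n \<Rightarrow> real \<Rightarrow> real \<Rightarrow> real \<Rightarrow> real^'n^'n" where
  "Phi a b x y z = (\<chi> i j. if i = a then (if j = a then 1 else if j = b then z else x)
     else if i = b then (if j = a then z else if j = b then 1 else y)
     else (if j = a then x else if j = b then y else 1))"

definition gam :: "'n \<Rightarrow> 'n \<Rightarrow> real^'n" where
  "gam a b = (\<chi> k. if k = a \<or> k = b then 0 else 1)"

lemma Phi_outer:
  assumes "a \<noteq> b"
  shows "Phi a b x y z = outer (gam a b) (gam a b) + outer (axis a 1) (axis a 1) + outer (axis b 1) (axis b 1)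
    + x *\<^sub>R (outer (axis a 1) (gam a b) + outer (gam a b) (axis a 1))
    + y *\<^sub>R (outer (axis b 1) (gam a b) + outer (gam a b) (axis b 1))
    + z *\<^sub>R (outer (axis a 1) (axis b 1) + outer (axis b 1) (axis a 1))"
  using assms by (simp add: vec_eq_iff Phi_def outer_def gam_def axis_def)

lemma Phi_quad:
  assumes "a \<noteq> b"
  shows "v \<bullet> (Phi a b x y z *v v) = (gam a b \<bullet> v)^2 + (v$a)^2 + (v$b)^2 + 2*x*(v$a)*(gam a b \<bullet> v)
     + 2*y*(v$b)*(gam a b \<bullet> v) + 2*z*(v$a)*(v$b)"
  unfolding Phi_outer[OF assms]
  by (simp add: matrix_vector_mult_add_rdistrib mvscale inner_add_right outer_quad inner_axis' power2_eq_square algebra_simps)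

lemma Phi_entries:
  assumes "a \<noteq> b" "c \<noteq> a" "c \<noteq> b"
  shows "Phi a b x y z $ a $ c = x" "Phi a b x y z $ b $ c = y" "Phi a b x y z $ a $ b = z"
  using assms by (auto simp: Phi_def)

lemma Phi_in:
  assumes "a \<noteq> b"
    and q: "\<And>g p r. 0 \<le> g^2 + p^2 + r^2 + 2*x*p*g + 2*y*r*g + 2*z*p*r"
  shows "Phi a b x y z \<in> elliptope"
  unfolding elliptope_def psd_def
proof (intro CollectI conjI allI)
  show "transpose (Phi a b x y z) = Phi a b x y z"
    using assms(1) by (auto simp: transpose_def vec_eq_iff Phi_def)
  fix v
  show "0 \<le> v \<bullet> (Phi a b x y z *v v)" unfolding Phi_quad[OF assms(1)] by (rule q)
next
  fix i show "Phi a b x y z $ i $ i = 1" by (simp add: Phi_def)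
qed

lemma aux9: "0 \<le> (A::real) \<Longrightarrow> 0 \<le> B \<Longrightarrow> 0 \<le> C \<Longrightarrow> 0 \<le> D \<Longrightarrow> 0 \<le> E \<Longrightarrow> 0 \<le> F
  \<Longrightarrow> 0 \<le> G \<Longrightarrow> 0 \<le> H \<Longrightarrow> 0 \<le> I \<Longrightarrow> 0 \<le> (G + H + I)/3 + (A + B + C + D + E + F)/2"
  by (intro add_nonneg_nonneg divide_nonneg_nonneg) auto

lemma Phi_near:
  assumes "a \<noteq> b" "\<bar>x - 1/3\<bar> \<le> 1/6" "\<bar>y - 1/3\<bar> \<le> 1/6" "\<bar>z + 1/3\<bar> \<le> 1/6"
  shows "Phi a b x y z \<in> elliptope"
proof (rule Phi_in[OF assms(1)])
  fix g p r :: real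
  have h1: "0 \<le> 1/6 + (x - 1/3)" "0 \<le> 1/6 - (x - 1/3)" using assms(2) unfolding abs_le_iff by linarith+
  have h2: "0 \<le> 1/6 + (y - 1/3)" "0 \<le> 1/6 - (y - 1/3)" using assms(3) unfolding abs_le_iff by linarith+
  have h3: "0 \<le> 1/6 + (z + 1/3)" "0 \<le> 1/6 - (z + 1/3)" using assms(4) unfolding abs_le_iff by linarith+
  have eq: "g^2 + p^2 + r^2 + 2*x*p*g + 2*y*r*g + 2*z*p*r =
     ((g+p)^2 + (g+r)^2 + (p-r)^2)/3 +
     ((1/6 + (x - 1/3))*(p+g)^2 + (1/6 - (x - 1/3))*(p-g)^2
     + (1/6 + (y - 1/3))*(r+g)^2 + (1/6 - (y - 1/3))*(r-g)^2
     + (1/6 + (z + 1/3))*(p+r)^2 + (1/6 - (z + 1/3))*(p-r)^2)/2"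
    by (simp add: power2_eq_square field_simps)
  show "0 \<le> g^2 + p^2 + r^2 + 2*x*p*g + 2*y*r*g + 2*z*p*r"
    unfolding eq by (rule aux9[OF mult_nonneg_nonneg[OF h1(1) zero_le_power2[of "p+g"]] mult_nonneg_nonneg[OF h1(2) zero_le_power2[of "p-g"]]
      mult_nonneg_nonneg[OF h2(1) zero_le_power2[of "r+g"]] mult_nonneg_nonneg[OF h2(2) zero_le_power2[of "r-g"]]
      mult_nonneg_nonneg[OF h3(1) zero_le_power2[of "p+r"]] mult_nonneg_nonneg[OF h3(2) zero_le_power2[of "p-r"]]
      zero_le_power2 zero_le_power2 zero_le_power2])
qed

lemma Phi_sq:
  assumes "a \<noteq> b" "x^2 = 1" "y^2 = 1" "z = x*y"
  shows "Phi a b x y z \<in> elliptope"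
proof (rule Phi_in[OF assms(1)])
  fix g p r :: real
  have "g^2 + p^2 + r^2 + 2*x*p*g + 2*y*r*g + 2*z*p*r = (g + x*p + y*r)^2"
    using assms by (simp add: power2_eq_square algebra_simps)
  then show "0 \<le> g^2 + p^2 + r^2 + 2*x*p*g + 2*y*r*g + 2*z*p*r" by simp
qed

lemma A0_Phi: "a \<noteq> b \<Longrightarrow> A0 = Phi a b 1 1 1"
  by (simp add: A0_def Phi_def vec_eq_iff)

lemma Aa_Phi: "a \<noteq> b \<Longrightarrow> Amu a = Phi a b (-1) 1 (-1)"
  by (simp add: Amu_def sgnvec_def Phi_def vec_eq_iff)

lemma Ab_Phi: "a \<noteq> b \<Longrightarrow> Amu b = Phi a b 1 (-1) (-1)"
  by (auto simp add: Amu_def sgnvec_def Phi_def vec_eq_iff)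

lemma Phi_comb2: "u *\<^sub>R Phi a b x y z + v *\<^sub>R Phi a b x' y' z' = Phi a b (u*x+ v * x') (u*y+ v * y') (u*z+ v * z')"
  if "u + v = 1"
  using that by (simp add: Phi_def vec_eq_iff)

lemma Phi_comb3: "u *\<^sub>R Phi a b x y z + v *\<^sub>R Phi a b x' y' z' + w *\<^sub>R Phi a b x'' y'' z''
   = Phi a b (u*x+ v * x'+w*x'') (u*y+ v * y'+w*y'') (u*z+ v * z'+w*z'')"
  if "u + v + w = 1"
  using that by (simp add: Phi_def vec_eq_iff)

lemma Phi_line: "Phi a b x y z + t *\<^sub>R (Phi a b x' y' z' - Phi a b x y z)
   = Phi a b (x + t*(x'-x)) (y + t*(y'-y)) (z + t*(z'-z))"
  by (simp add: Phi_def vec_eq_iff algebra_simps)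

lemma Phi_par: "Phi a b x y z + (Phi a b x' y' z' - Phi a b x'' y'' z'')
   = Phi a b (x + x' - x'') (y + y' - y'') (z + z' - z'')"
  by (simp add: Phi_def vec_eq_iff algebra_simps)

lemma ell_L:
  assumes "X \<in> elliptope" "a \<noteq> b" "c \<noteq> a" "c \<noteq> b"
  shows "X$a$c + X$b$c - X$a$b \<le> 3/2"
proof -
  have s: "\<And>i j. X$j$i = X$i$j" using assms by (simp add: elliptope_def sym_entry)
  have d: "\<And>i. X$i$i = 1" using assms by (auto simp: elliptope_def)
  have p: "psd X" using assms by (simp add: elliptope_def)
  have "0 \<le> (1 *\<^sub>R axis c 1 + (-1) *\<^sub>R axis a 1 + (-1) *\<^sub>R axis b 1) \<bullet> (X *v (1 *\<^sub>R axis c 1 + (-1) *\<^sub>R axis a 1 + (-1) *\<^sub>R axis b (1::real)))"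
    using p psd_def by blast
  hence "0 \<le> 3 - 2*X$c$a - 2*X$c$b + 2*X$a$b" unfolding Q3 using s d by simp
  then show ?thesis using s[of a c] s[of b c] by linarith
qed

lemma ell_convex: "convex (elliptope :: (real^'n^'n) set)"
proof (rule convexI)
  fix X Y :: "real^'n^'n" and u v :: real
  assume X: "X \<in> elliptope" and Y: "Y \<in> elliptope" and u0: "0 \<le> u" and v0: "0 \<le> v" and uv1: "u + v = 1"
  have uv: "0 \<le> u \<and> 0 \<le> v \<and> u + v = 1" using u0 v0 uv1 by simp
  have sX: "\<And>i j. X$j$i = X$i$j" and sY: "\<And>i j. Y$j$i = Y$i$j"
    using X Y by (auto simp add: elliptope_def sym_entry)
  have "transpose (u *\<^sub>R X + v *\<^sub>R Y) = u *\<^sub>R X + v *\<^sub>R Y"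
    using sX sY by (simp add: transpose_def vec_eq_iff)
  moreover have "psd (u *\<^sub>R X + v *\<^sub>R Y)"
    unfolding psd_def
  proof
    fix w :: "real^'n"
    have "0 \<le> w \<bullet> (X *v w)" "0 \<le> w \<bullet> (Y *v w)" using X Y by (auto simp: elliptope_def psd_def)
    then show "0 \<le> w \<bullet> ((u *\<^sub>R X + v *\<^sub>R Y) *v w)"
      using uv by (simp add: matrix_vector_mult_add_rdistrib mvscale inner_add_right)
  qed
  moreover have "\<forall>i. (u *\<^sub>R X + v *\<^sub>R Y) $ i $ i = 1"
    using X Y uv by (simp add: elliptope_def)
  ultimately show "u *\<^sub>R X + v *\<^sub>R Y \<in> elliptope" by (simp add: elliptope_def)
qed

lemma affine_line:
  assumes f: "affine_on S f" and S: "x \<in> S" "y \<in> S" "z \<in> S" and z: "z = x + t *\<^sub>R (y - x)"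
  shows "f z = f x + t *\<^sub>R (f y - f x)"
proof (cases "t < 0")
  case True
  have ca: "1/(1-t) - 1/(1-t)*t = 1" "1/(1-t)*t + (1 - 1/(1-t)) = 0" using True by (simp_all add: field_simps)
  have "(1/(1-t)) *\<^sub>R z + (1 - 1/(1-t)) *\<^sub>R y = (1/(1-t) - 1/(1-t)*t) *\<^sub>R x + (1/(1-t)*t + (1 - 1/(1-t))) *\<^sub>R y"
    unfolding z by (simp add: algebra_simps)
  then have "x = (1/(1-t)) *\<^sub>R z + (1 - 1/(1-t)) *\<^sub>R y" unfolding ca by simp
  moreover have "0 \<le> 1/(1-t)" "1/(1-t) \<le> 1" using True by (simp_all add: field_simps)
  ultimately have "f x = (1/(1-t)) *\<^sub>R f z + (1 - 1/(1-t)) *\<^sub>R f y"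
    using f S unfolding affine_on_def by metis
  then have e1: "(1-t) *\<^sub>R f x = ((1-t)*(1/(1-t))) *\<^sub>R f z + ((1-t)*(1 - 1/(1-t))) *\<^sub>R f y"
    by (simp add: scaleR_add_right)
  have c: "(1-t)*(1/(1-t)) = 1" "(1-t)*(1 - 1/(1-t)) = (1-t) - 1" using True by (simp_all add: field_simps)
  from e1[unfolded c] have "(1-t) *\<^sub>R f x = f z + ((1-t) - 1) *\<^sub>R f y" by simp
  then show ?thesis by (simp add: algebra_simps)
next
  case False
  show ?thesis
  proof (cases "t \<le> 1")
    case True
    have "z = t *\<^sub>R y + (1 - t) *\<^sub>R x" unfolding z by (simp add: algebra_simps)
    then have "f z = t *\<^sub>R f y + (1 - t) *\<^sub>R f x" using f S True False unfolding affine_on_def by auto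
    then show ?thesis by (simp add: algebra_simps)
  next
    case False2: False
    have ca: "1/t * t = 1" "1/t - 1/t*t + (1 - 1/t) = 0" using False2 by (simp_all add: field_simps)
    have "(1/t) *\<^sub>R z + (1 - 1/t) *\<^sub>R x = (1/t * t) *\<^sub>R y + (1/t - 1/t*t + (1 - 1/t)) *\<^sub>R x"
      unfolding z by (simp add: algebra_simps)
    then have "y = (1/t) *\<^sub>R z + (1 - 1/t) *\<^sub>R x" unfolding ca by simp
    moreover have "0 \<le> 1/t" "1/t \<le> 1" using False2 by (simp_all add: field_simps)
    ultimately have "f y = (1/t) *\<^sub>R f z + (1 - 1/t) *\<^sub>R f x"
      using f S unfolding affine_on_def by metis
    then have e1: "t *\<^sub>R f y = (t * (1/t)) *\<^sub>R f z + (t * (1 - 1/t)) *\<^sub>R f x"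
      by (simp add: scaleR_add_right)
    have c: "t * (1/t) = 1" "t * (1 - 1/t) = t - 1" using False2 by (simp_all add: field_simps)
    from e1[unfolded c] have "t *\<^sub>R f y = f z + (t - 1) *\<^sub>R f x" by simp
    then show ?thesis by (simp add: algebra_simps)
  qed
qed

lemma face_lemma:
  assumes X: "X \<in> elliptope" and Y: "Y \<in> elliptope" and u: "0 < u" "u < 1"
    and eq: "u *\<^sub>R Y + (1 - u) *\<^sub>R X = Phi a b (1/3) (1/3) (-1/3)"
    and abc: "a \<noteq> b" "c \<noteq> a" "c \<noteq> b"
  shows "X = Phi a b (X$a$c) (X$b$c) (X$a$b)"
proof -
  have s: "\<And>i j. X$j$i = X$i$j" using X by (simp add: elliptope_def sym_entry)
  have d: "\<And>i. X$i$i = 1" using X by (auto simp: elliptope_def)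
  have p: "psd X" using X by (simp add: elliptope_def)
  have out: "X$i$j = 1" if "i \<noteq> a" "i \<noteq> b" "j \<noteq> a" "j \<noteq> b" for i j
  proof -
    have "u * Y$i$j + (1-u) * X$i$j = Phi a b (1/3) (1/3) (-1/3) $ i $ j"
      using arg_cong[OF eq, of "\<lambda>M. M$i$j"] by simp
    also have "\<dots> = 1" using that by (simp add: Phi_def)
    finally have e: "u * Y$i$j + (1-u) * X$i$j = 1" .
    have "Y$i$j \<le> 1" "X$i$j \<le> 1" using ell_entry[OF Y] ell_entry[OF X] abs_le_iff by blast+
    then have "u * Y$i$j \<le> u" using u by simp
    then have "(1-u) * 1 \<le> (1-u) * X$i$j" using e by simp
    then have "1 \<le> X$i$j" using u by simp
    then show ?thesis using \<open>X$i$j \<le> 1\<close> by simp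
  qed
  have row: "X$k$i = X$k$c" if "i \<noteq> a" "i \<noteq> b" "k = a \<or> k = b" for i k
  proof -
    define t where "t = X$k$c - X$k$i"
    have "0 \<le> (1 *\<^sub>R axis i 1 + (-1) *\<^sub>R axis c 1 + t *\<^sub>R axis k 1) \<bullet> (X *v (1 *\<^sub>R axis i 1 + (-1) *\<^sub>R axis c 1 + t *\<^sub>R axis k (1::real)))"
      using p psd_def by blast
    also have "\<dots> = 2 - 2 * X$i$c + 2*t*(X$k$i - X$k$c) + t*t"
      unfolding Q3 using s d by (simp add: algebra_simps)
    also have "X$i$c = 1" using out[of i c] that abc by simp
    finally have "0 \<le> - (t*t)" unfolding t_def by (simp add: algebra_simps)
    then have "t = 0" by (simp add: mult_le_0_iff) (meson mult_le_0_iff not_square_less_zero order_antisym_conv)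
    then show ?thesis unfolding t_def by simp
  qed
  show ?thesis
    unfolding vec_eq_iff Phi_def
  proof (intro allI)
    fix i j
    show "X$i$j = (\<chi> i j. if i = a then (if j = a then 1 else if j = b then X$a$b else X$a$c)
     else if i = b then (if j = a then X$a$b else if j = b then 1 else X$b$c)
     else (if j = a then X$a$c else if j = b then X$b$c else 1)) $ i $ j"
      using out row[of j a] row[of j b] row[of i a] row[of i b] d s[of a b] s[of i a] s[of i b]
      by (auto)
  qed
qed

lemma affD:
  assumes "affine_on S f" "x \<in> S" "y \<in> S" "0 \<le> u" "u \<le> 1"
  shows "f (u *\<^sub>R x + (1 - u) *\<^sub>R y) = u *\<^sub>R f x + (1 - u) *\<^sub>R f y"
  using assms unfolding affine_on_def by blast

lemma fix_convex:
  assumes "affine_on elliptope \<sigma>"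
  shows "convex {X \<in> (elliptope :: (real^'n^'n) set). \<sigma> X = X}"
proof (rule convexI)
  fix x y :: "real^'n^'n" and u v :: real
  assume x: "x \<in> {X \<in> elliptope. \<sigma> X = X}" and y: "y \<in> {X \<in> elliptope. \<sigma> X = X}"
    and u: "0 \<le> u" "0 \<le> v" "u + v = 1"
  have v: "v = 1 - u" using u by simp
  have "u *\<^sub>R x + v *\<^sub>R y \<in> elliptope" using convexD[OF ell_convex] x y u by blast
  moreover have "\<sigma> (u *\<^sub>R x + v *\<^sub>R y) = u *\<^sub>R x + v *\<^sub>R y"
    using assms x y u unfolding affine_on_def v by auto
  ultimately show "u *\<^sub>R x + v *\<^sub>R y \<in> {X \<in> elliptope. \<sigma> X = X}" by simp
qed

lemma fix_Aab:
  fixes \<sigma> :: "real^'n^'n \<Rightarrow> real^'n^'n"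
  assumes bij: "bij_betw \<sigma> elliptope elliptope"
    and aff: "affine_on elliptope \<sigma>"
    and f0: "\<sigma> A0 = A0"
    and fmu: "\<forall>mu. \<sigma> (Amu mu) = Amu mu"
    and abc: "a \<noteq> b" "c \<noteq> a" "c \<noteq> b"
  shows "\<sigma> (Phi a b (-1) (-1) 1) = Phi a b (-1) (-1) 1"
proof -
  let ?E = "elliptope :: (real^'n^'n) set"
  define Fx where "Fx = {X \<in> ?E. \<sigma> X = X}"
  have Fxc: "convex Fx" unfolding Fx_def by (rule fix_convex[OF aff])
  have img: "\<sigma> ` ?E = ?E" and inj: "inj_on \<sigma> ?E" using bij by (auto simp: bij_betw_def)
  have A0E: "A0 \<in> ?E" unfolding A0_Phi[OF abc(1)] by (rule Phi_sq[OF abc(1)]) auto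
  have AaE: "Amu a \<in> ?E" unfolding Aa_Phi[OF abc(1)] by (rule Phi_sq[OF abc(1)]) auto
  have AbE: "Amu b \<in> ?E" unfolding Ab_Phi[OF abc(1)] by (rule Phi_sq[OF abc(1)]) auto
  have "{A0, Amu a, Amu b} \<subseteq> Fx" using A0E AaE AbE f0 fmu unfolding Fx_def by auto
  then have hull: "convex hull {A0, Amu a, Amu b} \<subseteq> Fx" using Fxc by (simp add: hull_minimal)
  have tri: "Phi a b (l0 - l1 + l2) (l0 + l1 - l2) (l0 - l1 - l2) \<in> Fx"
    if "0 \<le> l0" "0 \<le> l1" "0 \<le> l2" "l0 + l1 + l2 = 1" for l0 l1 l2
  proof -
    have "l0 *\<^sub>R A0 + l1 *\<^sub>R Amu a + l2 *\<^sub>R Amu b \<in> convex hull {A0, Amu a, Amu b}"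
      unfolding convex_hull_3 using that by blast
    also have "l0 *\<^sub>R A0 + l1 *\<^sub>R Amu a + l2 *\<^sub>R Amu b = Phi a b (l0 - l1 + l2) (l0 + l1 - l2) (l0 - l1 - l2)"
      unfolding A0_Phi[OF abc(1)] Aa_Phi[OF abc(1)] Ab_Phi[OF abc(1)] Phi_comb3[OF that(4)] by simp
    finally show ?thesis using hull by blast
  qed
  define P where "P = Phi a b (1/3) (1/3) (-1/3)"
  have PF: "P \<in> Fx" unfolding P_def using tri[of "1/3" "1/3" "1/3"] by simp
  then have PE: "P \<in> ?E" and sP: "\<sigma> P = P" unfolding Fx_def by auto
  define Aab where "Aab = Phi a b (-1) (-1) 1"
  have AabE: "Aab \<in> ?E" unfolding Aab_def by (rule Phi_sq[OF abc(1)]) auto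
  define Y where "Y = Phi a b (1/2) (1/2) (-1/2)"
  have YE: "Y \<in> ?E" unfolding Y_def by (rule Phi_near[OF abc(1)]) auto
  obtain Y0 where Y0: "Y0 \<in> ?E" "\<sigma> Y0 = Y" using YE img by (metis imageE)
  obtain X0 where X0: "X0 \<in> ?E" "\<sigma> X0 = Aab" using AabE img by (metis imageE)
  have PYA: "P = (8/9) *\<^sub>R Y + (1 - 8/9) *\<^sub>R Aab"
    unfolding P_def Y_def Aab_def by (subst Phi_comb2) simp_all
  have cE: "(8/9) *\<^sub>R Y0 + (1 - 8/9) *\<^sub>R X0 \<in> ?E"
    using convexD[OF ell_convex Y0(1) X0(1)] by simp
  have "\<sigma> ((8/9) *\<^sub>R Y0 + (1 - 8/9) *\<^sub>R X0) = (8/9) *\<^sub>R \<sigma> Y0 + (1 - 8/9) *\<^sub>R \<sigma> X0"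
    by (rule affD[OF aff Y0(1) X0(1)]) auto
  also have "\<dots> = (8/9) *\<^sub>R Y + (1 - 8/9) *\<^sub>R Aab" using Y0(2) X0(2) by simp
  also have "\<dots> = \<sigma> P" using PYA sP by simp
  finally have "(8/9) *\<^sub>R Y0 + (1 - 8/9) *\<^sub>R X0 = P" using inj cE PE by (meson inj_onD)
  then have X0Phi: "X0 = Phi a b (X0$a$c) (X0$b$c) (X0$a$b)"
    using face_lemma[OF X0(1) Y0(1), of "8/9" a b c] abc unfolding P_def by simp
  define x0 where "x0 = X0$a$c"
  define y0 where "y0 = X0$b$c"
  define z0 where "z0 = X0$a$b"
  have bx: "\<bar>x0\<bar> \<le> 1" "\<bar>y0\<bar> \<le> 1" "\<bar>z0\<bar> \<le> 1" unfolding x0_def y0_def z0_def using ell_entry[OF X0(1)] by auto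
  have bl: "x0 + y0 - z0 \<le> 3/2" unfolding x0_def y0_def z0_def using ell_L[OF X0(1) abc] .
  have sAE: "\<sigma> Aab \<in> ?E" using AabE img by blast
  define m where "m = (\<sigma> Aab)$a$c + (\<sigma> Aab)$b$c - (\<sigma> Aab)$a$b"
  have bm: "m \<le> 3/2" "-3 \<le> m" unfolding m_def using ell_L[OF sAE abc] ell_entry[OF sAE, of a c]
      ell_entry[OF sAE, of b c] ell_entry[OF sAE, of a b] by (auto simp: abs_le_iff)
  define l0 where "l0 = x0 + y0 - z0"
  define al where "al = (1 - l0)/32"
  define al' :: real where "al' = 1/8"
  have bal: "-1/64 \<le> al" "al \<le> 1/8" unfolding al_def l0_def using bx bl by (auto simp: abs_le_iff)
  define Z where "Z = Phi a b (1/3 - 4*al/3) (1/3 - 4*al/3) (-1/3 + 4*al/3)"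
  have ZE: "Z \<in> ?E" unfolding Z_def by (rule Phi_near[OF abc(1)]) (use bal in \<open>auto simp: abs_le_iff\<close>)
  have Zl: "Z = P + al *\<^sub>R (Aab - P)" unfolding Z_def P_def Aab_def Phi_line by (simp add: algebra_simps)
  define Z' where "Z' = Phi a b (1/3 + al'*(x0 - 1/3)) (1/3 + al'*(y0 - 1/3)) (-1/3 + al'*(z0 + 1/3))"
  have Z'E: "Z' \<in> ?E" unfolding Z'_def 
  proof (rule Phi_near[OF abc(1)])
    show "\<bar>1/3 + al'*(x0 - 1/3) - 1/3\<bar> \<le> 1/6" "\<bar>1/3 + al'*(y0 - 1/3) - 1/3\<bar> \<le> 1/6"
      "\<bar>-1/3 + al'*(z0 + 1/3) + 1/3\<bar> \<le> 1/6"
      using bx unfolding al'_def abs_le_iff by auto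
  qed
  have Z'l: "Z' = P + al' *\<^sub>R (X0 - P)" unfolding Z'_def P_def
    apply (subst X0Phi) unfolding Phi_line x0_def y0_def z0_def by (simp add: algebra_simps)
  define d1 where "d1 = al'*(x0 - 1/3) + 4*al/3"
  define d2 where "d2 = al'*(y0 - 1/3) + 4*al/3"
  have d3: "al'*(z0 + 1/3) - 4*al/3 = d1 + d2" unfolding d1_def d2_def al_def al'_def l0_def by (simp add: field_simps)
  define W where "W = Phi a b (1/3 + d1) (1/3 + d2) (-1/3 + (d1 + d2))"
  have Wl: "W = P + (Z' - Z)" unfolding W_def Z'_def Z_def P_def Phi_par d3[symmetric]
    unfolding d1_def d2_def by (simp add: algebra_simps)
  have bd: "\<bar>d1\<bar> \<le> 1/3" "\<bar>d2\<bar> \<le> 1/3"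
    unfolding d1_def d2_def al'_def abs_le_iff using bx[unfolded abs_le_iff] bal by (auto simp: field_simps)
  have WF: "W \<in> Fx"
  proof -
    have m: "Phi a b ((1/3 + (d1+d2)/2) - (1/3 - d1/2) + (1/3 - d2/2)) ((1/3 + (d1+d2)/2) + (1/3 - d1/2) - (1/3 - d2/2))
        ((1/3 + (d1+d2)/2) - (1/3 - d1/2) - (1/3 - d2/2)) \<in> Fx"
      by (rule tri) (use bd in \<open>auto simp: abs_le_iff field_simps\<close>)
    have e: "(1/3 + (d1+d2)/2) - (1/3 - d1/2) + (1/3 - d2/2) = 1/3 + d1"
      "(1/3 + (d1+d2)/2) + (1/3 - d1/2) - (1/3 - d2/2) = 1/3 + d2"
      "(1/3 + (d1+d2)/2) - (1/3 - d1/2) - (1/3 - d2/2) = -1/3 + (d1 + d2)" by (simp_all add: field_simps)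
    show ?thesis unfolding W_def using m[unfolded e] .
  qed
  then have WE: "W \<in> ?E" and sW: "\<sigma> W = W" unfolding Fx_def by auto
  have sZ: "\<sigma> Z = P + al *\<^sub>R (\<sigma> Aab - P)"
    using affine_line[OF aff PE AabE ZE Zl] sP by simp
  have sZ': "\<sigma> Z' = P + al' *\<^sub>R (Aab - P)"
    using affine_line[OF aff PE X0(1) Z'E Z'l] sP X0(2) by simp
  have mid: "(1/2) *\<^sub>R Z' + (1 - 1/2) *\<^sub>R P = (1/2) *\<^sub>R Z + (1 - 1/2) *\<^sub>R W"
    unfolding Wl by (simp add: algebra_simps)
  have "(1/2) *\<^sub>R \<sigma> Z' + (1 - 1/2) *\<^sub>R \<sigma> P = (1/2) *\<^sub>R \<sigma> Z + (1 - 1/2) *\<^sub>R \<sigma> W"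
    using affD[OF aff Z'E PE, of "1/2"] affD[OF aff ZE WE, of "1/2"] mid by simp
  then have "(1/2) *\<^sub>R (\<sigma> Z' + P) = (1/2) *\<^sub>R (\<sigma> Z + W)" using sP sW by (simp add: scaleR_add_right)
  then have veq: "\<sigma> Z' + P = \<sigma> Z + W" by simp
  define L where "L = (\<lambda>M::real^'n^'n. M$a$c + M$b$c - M$a$b)"
  have "L (\<sigma> Z' + P) = L (\<sigma> Z + W)" using veq by simp
  then have "(1 + al' * (-3 - 1)) + 1 = (1 + al * (m - 1)) + 1"
    unfolding sZ sZ' W_def L_def P_def Aab_def m_def using abc
    by (simp add: Phi_entries algebra_simps)
  then have key: "(1 - l0) * (m - 1) = - 16" unfolding al_def al'_def by (simp add: field_simps)
  have bl0: "-3 \<le> l0" "l0 \<le> 3/2" unfolding l0_def using bx bl by (auto simp: abs_le_iff)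
  have "l0 = -3"
  proof (rule ccontr)
    assume "l0 \<noteq> -3"
    then have kp: "-3 < l0" using bl0 by simp
    show False
    proof (cases "0 \<le> 1 - l0")
      case True
      have "(1 - l0) * (-4) \<le> (1 - l0) * (m - 1)" using True bm by (intro mult_left_mono) auto
      then show False using key kp by simp
    next
      case False
      have "(1 - l0) * (1/2) \<le> (1 - l0) * (m - 1)" using False bm by (intro mult_left_mono_neg) auto
      then show False using key bl0 by simp
    qed
  qed
  then have "x0 = -1" "y0 = -1" "z0 = 1" unfolding l0_def using bx by (auto simp: abs_le_iff)
  then have "X0 = Aab" using X0Phi unfolding Aab_def x0_def y0_def z0_def by simp
  then show ?thesis using X0(2) unfolding Aab_def by simp
qed

lemma Phi00_entry:
  assumes "a \<noteq> b" "i \<noteq> j"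
  shows "Phi a b 0 0 t $ i $ j = (if (a,b) = (i,j) \<or> (a,b) = (j,i) then t
           else if a \<noteq> i \<and> a \<noteq> j \<and> b \<noteq> i \<and> b \<noteq> j then 1 else 0)"
  using assms by (auto simp: Phi_def)

lemma Phi_diag: "Phi a b x y z $ i $ i = 1"
  by (simp add: Phi_def)

lemma fix_Pt:
  fixes \<sigma> :: "real^'n^'n \<Rightarrow> real^'n^'n"
  assumes bij: "bij_betw \<sigma> elliptope elliptope"
    and aff: "affine_on elliptope \<sigma>"
    and f0: "\<sigma> A0 = A0"
    and fmu: "\<forall>mu. \<sigma> (Amu mu) = Amu mu"
    and ab: "a \<noteq> b" and t: "\<bar>t\<bar> \<le> 1"
  shows "Phi a b 0 0 t \<in> {X \<in> elliptope. \<sigma> X = X}"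
proof -
  let ?F = "{X \<in> elliptope. \<sigma> X = X} :: (real^'n^'n) set"
  have Fc: "convex ?F" by (rule fix_convex[OF aff])
  have A0E: "A0 \<in> (elliptope :: (real^'n^'n) set)" unfolding A0_Phi[OF ab] by (rule Phi_sq[OF ab]) auto
  have AaE: "Amu a \<in> (elliptope :: (real^'n^'n) set)" unfolding Aa_Phi[OF ab] by (rule Phi_sq[OF ab]) auto
  have AbE: "Amu b \<in> (elliptope :: (real^'n^'n) set)" unfolding Ab_Phi[OF ab] by (rule Phi_sq[OF ab]) auto
  have AabE: "Phi a b (-1) (-1) 1 \<in> elliptope" by (rule Phi_sq[OF ab]) auto
  have sAab: "\<sigma> (Phi a b (-1) (-1) 1) = Phi a b (-1) (-1) 1"
  proof (cases "\<exists>c. c \<noteq> a \<and> c \<noteq> b")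
    case True
    then obtain c where "c \<noteq> a" "c \<noteq> b" by blast
    then show ?thesis using fix_Aab[OF bij aff f0 fmu ab] by blast
  next
    case False
    then have "Phi a b (-1) (-1) 1 = A0" by (auto simp: Phi_def A0_def vec_eq_iff)
    then show ?thesis using f0 by simp
  qed
  have F: "A0 \<in> ?F" "Amu a \<in> ?F" "Amu b \<in> ?F" "Phi a b (-1) (-1) 1 \<in> ?F"
    using A0E AaE AbE AabE f0 fmu sAab by auto
  have u: "0 \<le> (1+t)/2" "0 \<le> (1-t)/2" "(1+t)/2 + (1-t)/2 = 1" using t by (auto simp: abs_le_iff field_simps)
  have g1: "((1+t)/2) *\<^sub>R A0 + ((1-t)/2) *\<^sub>R Amu a \<in> ?F" by (rule convexD[OF Fc F(1) F(2) u])
  have g2: "((1+t)/2) *\<^sub>R Phi a b (-1) (-1) 1 + ((1-t)/2) *\<^sub>R Amu b \<in> ?F" by (rule convexD[OF Fc F(4) F(3) u])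
  have "(1/2) *\<^sub>R (((1+t)/2) *\<^sub>R A0 + ((1-t)/2) *\<^sub>R Amu a)
      + (1/2) *\<^sub>R (((1+t)/2) *\<^sub>R Phi a b (-1) (-1) 1 + ((1-t)/2) *\<^sub>R Amu b) \<in> ?F"
    by (rule convexD[OF Fc g1 g2]) auto
  also have "(1/2) *\<^sub>R (((1+t)/2) *\<^sub>R A0 + ((1-t)/2) *\<^sub>R Amu a)
      + (1/2) *\<^sub>R (((1+t)/2) *\<^sub>R Phi a b (-1) (-1) 1 + ((1-t)/2) *\<^sub>R Amu b) = Phi a b 0 0 t"
    unfolding A0_Phi[OF ab] Aa_Phi[OF ab] Ab_Phi[OF ab] Phi_comb2[OF u(3)]
    by (subst Phi_comb2) (simp_all add: field_simps)
  finally show ?thesis .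
qed

theorem lemma12:
  fixes \<sigma> :: "real^'n^'n \<Rightarrow> real^'n^'n"
  assumes "bij_betw \<sigma> elliptope elliptope"
    and "affine_on elliptope \<sigma>"
    and "\<sigma> A0 = A0"
    and "\<forall>mu. \<sigma> (Amu mu) = Amu mu"
  shows "\<forall>X \<in> elliptope. \<sigma> X = X"
proof
  note bij = assms(1) and aff = assms(2) and f0 = assms(3) and fmu = assms(4)
  fix X :: "real^'n^'n"
  assume XE: "X \<in> elliptope"
  have sX: "\<And>i j. X$j$i = X$i$j" using XE by (simp add: elliptope_def sym_entry)
  have dX: "\<And>i. X$i$i = 1" using XE by (auto simp: elliptope_def)
  let ?F = "{X \<in> elliptope. \<sigma> X = X} :: (real^'n^'n) set"
  have Fc: "convex ?F" by (rule fix_convex[OF aff])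
  show "\<sigma> X = X"
  proof (cases "\<exists>a b :: 'n. a \<noteq> b")
    case False
    then have "X = A0" using dX unfolding A0_def vec_eq_iff by (metis vec_lambda_beta)
    then show ?thesis using f0 by simp
  next
    case True
    define Pairs where "Pairs = {p :: 'n \<times> 'n. fst p \<noteq> snd p}"
    have finP: "finite Pairs" by simp
    have neP: "Pairs \<noteq> {}" using True unfolding Pairs_def by auto
    define M where "M = real (card Pairs)"
    have M1: "1 \<le> M" unfolding M_def using finP neP by (simp add: Suc_leI card_gt_0_iff)
    define D where "D = (\<lambda>i j. \<Sum>p\<in>Pairs. if fst p \<noteq> i \<and> fst p \<noteq> j \<and> snd p \<noteq> i \<and> snd p \<noteq> j then 1 else (0::real))"
    have D0: "0 \<le> D i j" for i j unfolding D_def by (rule sum_nonneg) auto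
    have DM: "D i j \<le> M" for i j
    proof -
      have "D i j \<le> (\<Sum>p\<in>Pairs. 1)" unfolding D_def by (rule sum_mono) auto
      then show ?thesis unfolding M_def by simp
    qed
    have Dsym: "D j i = D i j" for i j unfolding D_def by (rule sum.cong) auto
    define tt where "tt = (\<lambda>p. (X $ fst p $ snd p - D (fst p) (snd p) / M) / 2)"
    have ttb: "\<bar>tt p\<bar> \<le> 1" for p
    proof -
      have "\<bar>X $ fst p $ snd p\<bar> \<le> 1" by (rule ell_entry[OF XE])
      moreover have "0 \<le> D (fst p) (snd p) / M" "D (fst p) (snd p) / M \<le> 1"
        using D0 DM M1 by (auto simp: field_simps)
      ultimately show ?thesis unfolding tt_def by (auto simp: abs_le_iff)
    qed
    define Z where "Z = (\<Sum>p\<in>Pairs. (1/M) *\<^sub>R Phi (fst p) (snd p) 0 0 (tt p))"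
    define W where "W = (\<Sum>p\<in>Pairs. (1/M) *\<^sub>R Phi (fst p) (snd p) 0 0 0)"
    have wsum: "(\<Sum>p\<in>Pairs. 1/M) = 1" using M1 neP unfolding M_def by simp
    have ZF: "Z \<in> ?F" unfolding Z_def
      by (rule convex_sum[OF finP Fc wsum]) (use M1 fix_Pt[OF bij aff f0 fmu _ ttb] in \<open>auto simp: Pairs_def\<close>)
    have WF: "W \<in> ?F" unfolding W_def
      by (rule convex_sum[OF finP Fc wsum]) (use M1 fix_Pt[OF bij aff f0 fmu, of _ _ 0] in \<open>auto simp: Pairs_def\<close>)
    have ZWX: "Z = (1/M) *\<^sub>R X + (1 - 1/M) *\<^sub>R W"
    proof -
      have "Z $ i $ j = ((1/M) *\<^sub>R X + (1 - 1/M) *\<^sub>R W) $ i $ j" for i j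
      proof (cases "i = j")
        case True
        have "Z $ i $ j = (\<Sum>p\<in>Pairs. 1/M)" unfolding Z_def True by (simp add: Phi_diag)
        moreover have "W $ i $ j = (\<Sum>p\<in>Pairs. 1/M)" unfolding W_def True by (simp add: Phi_diag)
        ultimately show ?thesis using wsum True dX by (simp add: algebra_simps)
      next
        case False
        have sumsplit: "(\<Sum>p\<in>Pairs. Phi (fst p) (snd p) 0 0 (f p) $ i $ j)
            = f (i,j) + f (j,i) + D i j" for f
        proof -
          have "(\<Sum>p\<in>Pairs. Phi (fst p) (snd p) 0 0 (f p) $ i $ j)
             = (\<Sum>p\<in>Pairs. (if p = (i,j) then f p else 0) + (if p = (j,i) then f p else 0)
                 + (if fst p \<noteq> i \<and> fst p \<noteq> j \<and> snd p \<noteq> i \<and> snd p \<noteq> j then 1 else 0))"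
          proof (rule sum.cong[OF refl])
            fix p assume "p \<in> Pairs"
            then have "fst p \<noteq> snd p" unfolding Pairs_def by simp
            then show "Phi (fst p) (snd p) 0 0 (f p) $ i $ j = (if p = (i,j) then f p else 0) + (if p = (j,i) then f p else 0)
                 + (if fst p \<noteq> i \<and> fst p \<noteq> j \<and> snd p \<noteq> i \<and> snd p \<noteq> j then 1 else 0)"
              using False by (cases p) (auto simp: Phi00_entry)
          qed
          also have "\<dots> = f (i,j) + f (j,i) + D i j"
            unfolding sum.distrib D_def using False finP by (simp add: Pairs_def)
          finally show ?thesis .
        qed
        have "Z $ i $ j = (1/M) * (\<Sum>p\<in>Pairs. Phi (fst p) (snd p) 0 0 (tt p) $ i $ j)"
          unfolding Z_def by (simp add: sum_distrib_left)
        also have "\<dots> = (1/M) * (tt (i,j) + tt (j,i) + D i j)" by (simp add: sumsplit)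
        finally have Zij: "Z $ i $ j = (1/M) * (tt (i,j) + tt (j,i) + D i j)" .
        have "W $ i $ j = (1/M) * (\<Sum>p\<in>Pairs. Phi (fst p) (snd p) 0 0 ((\<lambda>_. 0) p) $ i $ j)"
          unfolding W_def by (simp add: sum_distrib_left)
        also have "\<dots> = (1/M) * D i j" by (simp only: sumsplit) simp
        finally have Wij: "W $ i $ j = (1/M) * D i j" .
        show ?thesis unfolding Zij using Wij M1 sX[of i j] Dsym[of i j]
          by (simp add: tt_def field_simps)
      qed
      then show ?thesis by (simp add: vec_eq_iff)
    qed
    have ZE: "Z \<in> elliptope" and sZ: "\<sigma> Z = Z" and WE: "W \<in> elliptope" and sW: "\<sigma> W = W"
      using ZF WF by auto
    have "\<sigma> Z = (1/M) *\<^sub>R \<sigma> X + (1 - 1/M) *\<^sub>R \<sigma> W"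
      unfolding ZWX by (rule affD[OF aff XE WE]) (use M1 in auto)
    then have "(1/M) *\<^sub>R \<sigma> X = (1/M) *\<^sub>R X" using sZ sW ZWX by simp
    then show ?thesis using M1 by simp
  qed
qed

end
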